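(* Let $k=\mathbb{F}_3$, let $O_7(k)$ be the group of $7\times7$ matrices over $k$ orthogonal for the bilinear form $\langle x,y\rangle=x_1y_7+x_2y_6+\dots+x_7y_1$ on $k^7$, and let \[ A=\begin{pmatrix} 0&0&1&0&0&1&0\\ 1&0&0&0&0&0&1\\ 0&1&0&0&0&0&0\\ 0&0&0&0&0&0&0\\ 0&1&0&0&0&0&1\\ 0&0&1&0&1&0&0\\ 0&0&0&0&0&1&0 \end{pmatrix}. \] Then there exists $g\in O_7(k)$ such that $M=g^{-1}Ag$ satisfies $M_{ij}=0$ for all $(i,j)\in\{(4,1),(5,1),(5,2),(6,1),(6,2),(6,3),(7,1),(7,2),(7,3),(7,4)\}$. Even more, there exists $g\in O_7(k)$ such that $M=g^{-1}Ag$ satisfies these vanishing conditions and in addition $M_{31},M_{42},M_{53},M_{64},M_{75}\in k^\times$ (all remaining entries arbitrary).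
   Context: $M_{ij}$ denotes the entry in row $i$ and column $j$. *)

theory Defs
  imports "HOL-Analysis.Analysis" "HOL-Library.Numeral_Type"
begin

text \<open>The field k = F_3 is the type 3 of HOL-Library.Numeral_Type (the integers modulo 3,
  a commutative ring which is the field with 3 elements).  Vectors in k^7 and 7x7 matrices are
  indexed by the type 7, whose elements are 0,...,6; the paper's index i (1..7) is idx i.\<close>

definition idx :: "nat \<Rightarrow> 7" where
  "idx i = of_nat (i - 1)"

definition Jform :: "3 ^ 7 ^ 7" where
  "Jform = (\<chi> i j. if (i, j) \<in> {(idx a, idx (8 - a)) | a. a \<in> {1..7}} then 1 else 0)"

definition O7 :: "(3 ^ 7 ^ 7) set" where
  "O7 = {g. transpose g ** Jform ** g = Jform}"

definition Amat :: "3 ^ 7 ^ 7" where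
  "Amat = (\<chi> i j. if (i, j) \<in> (\<lambda>(a, b). (idx a, idx b)) `
        {(1,3),(1,6),(2,1),(2,7),(3,2),(5,2),(5,7),(6,3),(6,5),(7,6)} then 1 else 0)"

definition zero_pos :: "(nat \<times> nat) set" where
  "zero_pos = {(4,1),(5,1),(5,2),(6,1),(6,2),(6,3),(7,1),(7,2),(7,3),(7,4)}"

definition unit_pos :: "(nat \<times> nat) set" where
  "unit_pos = {(3,1),(4,2),(5,3),(6,4),(7,5)}"

end

theory Submission
  imports Defs
begin

lemma exhaust7: "(x::7) = 0 \<or> x = 1 \<or> x = 2 \<or> x = 3 \<or> x = 4 \<or> x = 5 \<or> x = 6"
proof (induct x)
  case (of_int z)
  then have "z = 0 \<or> z = 1 \<or> z = 2 \<or> z = 3 \<or> z = 4 \<or> z = 5 \<or> z = 6" by fastforce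
  then show ?case by auto
qed

lemma U7: "(UNIV::7 set) = {0,1,2,3,4,5,6}"
  using exhaust7 by auto

lemma sum7: "sum f (UNIV::7 set) = f 0 + f 1 + f 2 + f 3 + f 4 + f 5 + f 6"
  unfolding U7 by (simp add: add.assoc)

lemma all7: "(\<forall>i::7. P i) \<longleftrightarrow> P 0 \<and> P 1 \<and> P 2 \<and> P 3 \<and> P 4 \<and> P 5 \<and> P 6"
  by (metis exhaust7)

definition Gm :: "3 ^ 7 ^ 7" where "Gm = (\<chi> i j. (if i = 0 then (if j = 0 then 1 else (if j = 1 then 0 else (if j = 2 then 1 else (if j = 3 then 0 else (if j = 4 then 2 else (if j = 5 then 2 else 1)))))) else (if i = 1 then (if j = 0 then 0 else (if j = 1 then 1 else (if j = 2 then 2 else (if j = 3 then 1 else (if j = 4 then 0 else (if j = 5 then 1 else 0)))))) else (if i = 2 then (if j = 0 then 2 else (if j = 1 then 0 else (if j = 2 then 0 else (if j = 3 then 1 else (if j = 4 then 2 else (if j = 5 then 1 else 2)))))) else (if i = 3 then (if j = 0 then 2 else (if j = 1 then 0 else (if j = 2 then 0 else (if j = 3 then 0 else (if j = 4 then 0 else (if j = 5 then 0 else 1)))))) else (if i = 4 then (if j = 0 then 0 else (if j = 1 then 0 else (if j = 2 then 1 else (if j = 3 then 2 else (if j = 4 then 1 else (if j = 5 then 2 else 0)))))) else (if i = 5 then (if j = 0 then 2 else (if j = 1 then 0 else (if j = 2 then 2 else (if j = 3 then 0 else (if j = 4 then 1 else (if j = 5 then 2 else 2)))))) else (if j = 0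 then 1 else (if j = 1 then 1 else (if j = 2 then 2 else (if j = 3 then 0 else (if j = 4 then 2 else (if j = 5 then 1 else 1)))))))))))))"
definition Hm :: "3 ^ 7 ^ 7" where "Hm = (\<chi> i j. (if i = 0 then (if j = 0 then 1 else (if j = 1 then 2 else (if j = 2 then 0 else (if j = 3 then 1 else (if j = 4 then 2 else (if j = 5 then 0 else 1)))))) else (if i = 1 then (if j = 0 then 1 else (if j = 1 then 2 else (if j = 2 then 2 else (if j = 3 then 0 else (if j = 4 then 1 else (if j = 5 then 1 else 2)))))) else (if i = 2 then (if j = 0 then 2 else (if j = 1 then 1 else (if j = 2 then 1 else (if j = 3 then 0 else (if j = 4 then 2 else (if j = 5 then 0 else 2)))))) else (if i = 3 then (if j = 0 then 0 else (if j = 1 then 0 else (if j = 2 then 2 else (if j = 3 then 0 else (if j = 4 then 1 else (if j = 5 then 1 else 0)))))) else (if i = 4 then (if j = 0 then 2 else (if j = 1 then 2 else (if j = 2 then 1 else (if j = 3 then 0 else (if j = 4 then 0 else (if j = 5 then 2 else 1)))))) else (if i = 5 then (if j = 0 then 1 else (if j = 1 then 0 else (if j = 2 then 0 else (if j = 3 then 0 else (if j = 4 then 0 else (if j = 5 then 1 else 0)))))) else (if j = 0 then 1 else (if j = 1 then 2 else (if j = 2 then 0 else (if j = 3 then 2 else (if j = 4 then 2 else (if j = 5 then 0 else 1)))))))))))))"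

lemma Jform_eq: "Jform = (\<chi> i j. if i + j = 6 then 1 else 0)"
proof -
  have e: "{1..7::nat} = {1,2,3,4,5,6,7}" by auto
  have "{(idx a, idx (8 - a)) | a. a \<in> {1..7}} = (\<lambda>a. (idx a, idx (8 - a))) ` {1,2,3,4,5,6,7}"
    unfolding e[symmetric] by blast
  also have "... = {(0,6),(1,5),(2,4),(3,3),(4,2),(5,1),(6,0)}"
    by (simp add: idx_def)
  finally show ?thesis
    unfolding Jform_def vec_eq_iff all7 by simp
qed

lemma GH: "Gm ** Hm = mat 1"
  unfolding Gm_def Hm_def matrix_matrix_mult_def mat_def vec_eq_iff all7 sum7 by simp

lemma HG: "Hm ** Gm = mat 1"
  unfolding Gm_def Hm_def matrix_matrix_mult_def mat_def vec_eq_iff all7 sum7 by simp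

lemma inv: "matrix_inv Gm = Hm"
proof -
  have ex: "\<exists>A'. Gm ** A' = mat 1 \<and> A' ** Gm = mat 1" using GH HG by blast
  obtain A' where A': "A' = matrix_inv Gm" by blast
  have P: "Gm ** A' = mat 1 \<and> A' ** Gm = mat 1"
    unfolding A' matrix_inv_def by (rule someI_ex[OF ex])
  have "A' = A' ** (Gm ** Hm)" by (simp add: GH)
  also have "... = (A' ** Gm) ** Hm" by (simp add: matrix_mul_assoc)
  also have "... = Hm" using P by simp
  finally show ?thesis using A' by simp
qed

lemma GO: "Gm \<in> O7"
  unfolding O7_def Jform_eq Gm_def transpose_def matrix_matrix_mult_def vec_eq_iff all7 sum7
  by simp

lemma Aeq: "Amat = (\<chi> i j. (if i = 0 then (if j = 0 then 0 else (if j = 1 then 0 else (if j = 2 then 1 else (if j = 3 then 0 else (if j = 4 then 0 else (if j = 5 then 1 else 0)))))) else (if i = 1 then (if j = 0 then 1 else (if j = 1 then 0 else (if j = 2 then 0 else (if j = 3 then 0 else (if j = 4 then 0 else (if j = 5 then 0 else 1)))))) else (if i = 2 then (if j = 0 then 0 else (if j = 1 then 1 else (if j = 2 then 0 else (if j = 3 then 0 else (if j = 4 then 0 else (if j = 5 then 0 else 0)))))) else (if i = 3 then (if j = 0 then 0 else (if j = 1 then 0 else (if j = 2 then 0 else (if j = 3 then 0 else (if j = 4 then 0 else (if j = 5 then 0 else 0)))))) else (if i = 4 then (if j = 0 then 0 else (if j = 1 then 1 else (if j = 2 then 0 else (if j = 3 then 0 else (if j = 4 then 0 else (if j = 5 then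 0 else 1)))))) else (if i = 5 then (if j = 0 then 0 else (if j = 1 then 0 else (if j = 2 then 1 else (if j = 3 then 0 else (if j = 4 then 1 else (if j = 5 then 0 else 0)))))) else (if j = 0 then 0 else (if j = 1 then 0 else (if j = 2 then 0 else (if j = 3 then 0 else (if j = 4 then 0 else (if j = 5 then 1 else 0)))))))))))))"
proof -
  have "(\<lambda>(a, b). (idx a, idx b)) ` {(1,3),(1,6),(2,1),(2,7),(3,2),(5,2),(5,7),(6,3),(6,5),(7,6)}
     = {(0,2),(0,5),(1,0),(1,6),(2,1),(4,1),(4,6),(5,2),(5,4),(6,5)}"
    by (simp add: idx_def)
  then show ?thesis unfolding Amat_def vec_eq_iff all7 by simp
qed

lemma Meq: "Hm ** Amat ** Gm = (\<chi> i j. (if i = 0 then (if j = 0 then 0 else (if j = 1 then 0 else (if j = 2 then 0 else (if j = 3 then 0 else (if j = 4 then 1 else (if j = 5 then 0 else 0)))))) else (if i = 1 then (if j = 0 then 0 else (if j = 1 then 0 else (if j = 2 then 0 else (if j = 3 then 1 else (if j = 4 then 0 else (if j = 5 then 2 else 0)))))) else (if i = 2 then (if j = 0 then 1 else (if j = 1 then 0 else (if j = 2 then 0 else (if j = 3 then 2 else (if j = 4 then 1 else (if j = 5 then 0 else 1)))))) else (if i = 3 then (if j = 0 then 0 else (if j = 1 then 1 else (if j = 2 then 0 else (if j = 3 then 0 else (if j = 4 then 2 else (if j = 5 then 1 else 0)))))) else (if i = 4 then (if j = 0 then 0 else (if j = 1 then 0 else (if j = 2 then 1 else (if j = 3 then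 0 else (if j = 4 then 0 else (if j = 5 then 0 else 0)))))) else (if i = 5 then (if j = 0 then 0 else (if j = 1 then 0 else (if j = 2 then 0 else (if j = 3 then 1 else (if j = 4 then 0 else (if j = 5 then 0 else 0)))))) else (if j = 0 then 0 else (if j = 1 then 0 else (if j = 2 then 0 else (if j = 3 then 0 else (if j = 4 then 1 else (if j = 5 then 0 else 0)))))))))))))"
  unfolding Aeq Gm_def Hm_def matrix_matrix_mult_def vec_eq_iff all7 sum7 by simp

theorem lemma2p4:
  shows "(\<exists>g \<in> O7. let M = matrix_inv g ** Amat ** g in
            (\<forall>(i, j) \<in> zero_pos. M $ idx i $ idx j = 0))
       \<and> (\<exists>g \<in> O7. let M = matrix_inv g ** Amat ** g in
            (\<forall>(i, j) \<in> zero_pos. M $ idx i $ idx j = 0) \<and>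
            (\<forall>(i, j) \<in> unit_pos. M $ idx i $ idx j \<noteq> 0))"
proof -
  have c: "let M = matrix_inv Gm ** Amat ** Gm in
            (\<forall>(i, j) \<in> zero_pos. M $ idx i $ idx j = 0) \<and>
            (\<forall>(i, j) \<in> unit_pos. M $ idx i $ idx j \<noteq> 0)"
    unfolding inv Meq Let_def zero_pos_def unit_pos_def by (simp add: idx_def)
  have c1: "let M = matrix_inv Gm ** Amat ** Gm in
            (\<forall>(i, j) \<in> zero_pos. M $ idx i $ idx j = 0)"
    using c unfolding Let_def by blast
  show ?thesis
  proof
    show "\<exists>g \<in> O7. let M = matrix_inv g ** Amat ** g in
            (\<forall>(i, j) \<in> zero_pos. M $ idx i $ idx j = 0)"
      using c1 GO by blast
    show "\<exists>g \<in> O7. let M = matrix_inv g ** Amat ** g in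
            (\<forall>(i, j) \<in> zero_pos. M $ idx i $ idx j = 0) \<and>
            (\<forall>(i, j) \<in> unit_pos. M $ idx i $ idx j \<noteq> 0)"
      using c GO by blast
  qed
qed

end
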